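(* Consider the linear system $\dot x=(A+\theta_1C_1+\dots+\theta_lC_l)x+Bu$, $x\in\mathbb{R}^n$, $u\in\mathbb{R}^m$, with constant matrices $A,C_1,\dots,C_l\in\mathbb{R}^{n\times n}$, $B\in\mathbb{R}^{n\times m}$ and constant unknown $\theta=(\theta_1,\dots,\theta_l)'\in\mathbb{R}^l$. Let $K_\vartheta\in\mathbb{R}^{m\times n}$, $\vartheta\in\mathbb{R}^l$, be a family of gain matrices. Suppose there exist constants $\omega_\vartheta>0$ ($\vartheta\in\mathbb{R}^l$) and a continuous map $M:\mathbb{R}^l\to[1,+\infty)$ such that $|\exp(t(A+\vartheta_1C_1+\dots+\vartheta_lC_l+BK_\vartheta))|\le e^{-\omega_\vartheta t}M(\vartheta)$ for all $t\ge0$, $\vartheta\in\mathbb{R}^l$. Suppose also that for all $\theta,\hat\theta,\vartheta\in\mathbb{R}^l$ with $\hat\theta\ne\theta$ and $\vartheta\ne0$, the pair $(A+\theta_1C_1+\dots+\theta_lC_l+BK_{\hat\theta},\ \vartheta_1C_1+\dots+\vartheta_lC_l)$ is observable. Let $a>0$, $T>0$ and let $\tilde N>1$ be an integer. Then there exist constants $\tilde M_{\theta,\hat\theta}>0$, $(\theta,\hat\theta)\in\mathbb{R}^l\times\mathbb{R}^l$, such that for every $\theta,\hat\theta_0\in\mathbb{R}^l$, $x_0\in\mathbb{R}^n$, the solution of the hybrid closed-loop system described in the context with $x(0)=x_0$, $\hat\theta(0)=\hat\theta_0$, $z(0)=0$, $w(0)=0$ satisfies $|x(t)|\le\tilde M_{\theta,\hat\theta_0}e^{-\omega_\theta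 t}|x_0|$ for all $t\ge0$. Moreover, if $x_0\ne0$ then $\hat\theta(t)=\theta$ for all $t\ge T$.
   Context: Let $L:\mathbb{R}^n\to\mathbb{R}^{n\times l}$ be the linear map $L(x)=C_1xe_1'+\dots+C_lxe_l'$ (the $n\times l$ matrix with columns $C_1x,\dots,C_lx$), $e_1,\dots,e_l$ the standard basis of $\mathbb{R}^l$. Hybrid closed-loop system: event times $\tau_0=0$, $\tau_{i+1}=\min(\tau_i+T,r_i)$. On $[\tau_i,\tau_{i+1})$: $u(t)=K_{\hat\theta(\tau_i)}x(t)$, $\hat\theta(t)=\hat\theta(\tau_i)$, and $x$ is continuous and solves the system. Trigger: for $x(\tau_i)\ne0$, $r_i=\inf\{t>\tau_i:|x(t)|=|x(\tau_i)|\sqrt{a+M^2(\hat\theta(\tau_i))}\}$ ($\inf\emptyset=+\infty$); for $x(\tau_i)=0$, $r_i=\tau_i+T$. Auxiliary signals: $\dot z=x$, $\dot w=u$, $y=x-Az-Bw$ ($z\in\mathbb{R}^n$, $w\in\mathbb{R}^m$). Set $\mu_{i+1}=\min\{\tau_j:j\in\{0,\dots,i\},\tau_j\ge\tau_{i+1}-\tilde NT\}$, and for $\mu<\tau$, $q(\tau,\mu)=\int_\mu^\tau\int_\mu^\tau(L(z(t)-z(\sigma)))'(y(t)-y(\sigma))\,d\sigma\,dt$, $Q(\tau,\mu)=\int_\mu^\tau\int_\mu^\tau(L(z(t)-z(\sigma)))'(L(z(t)-z(\sigma)))\,d\sigma\,dt$. Update: $\hat\theta(\tau_{i+1})=\arg\min\{|\vartheta-\hat\theta(\tau_i)|^2:\vartheta\in\mathbb{R}^l,\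 q(\tau_{i+1},\mu_{i+1})=Q(\tau_{i+1},\mu_{i+1})\vartheta\}$. A pair $(F,H)$ of $n\times n$ matrices is observable if $He^{Ft}x_0=0$ for all $t$ in an interval $[0,\tau]$, $\tau>0$, implies $x_0=0$. *)

theory Defs
  imports "HOL-Analysis.Analysis"
begin

primrec mat_pow :: "real^'n^'n \<Rightarrow> nat \<Rightarrow> real^'n^'n" where
  "mat_pow F 0 = mat 1"
| "mat_pow F (Suc k) = F ** mat_pow F k"

definition mat_exp :: "real^'n^'n \<Rightarrow> real^'n^'n" where
  "mat_exp F = (\<Sum>k. (1 / fact k) *\<^sub>R mat_pow F k)"

definition mat_norm :: "real^'n^'m \<Rightarrow> real" where
  "mat_norm E = onorm (\<lambda>v. E *v v)"

definition observable :: "real^'n^'n \<Rightarrow> real^'n^'n \<Rightarrow> bool" where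
  "observable F H \<longleftrightarrow>
     (\<forall>x0 \<tau>. \<tau> > 0 \<and> (\<forall>t\<in>{0..\<tau>}. H *v (mat_exp (t *\<^sub>R F) *v x0) = 0) \<longrightarrow> x0 = 0)"

definition Apar :: "real^'n^'n \<Rightarrow> ('l::finite \<Rightarrow> real^'n^'n) \<Rightarrow> real^'l \<Rightarrow> real^'n^'n" where
  "Apar A C \<theta> = A + (\<Sum>k\<in>UNIV. (\<theta> $ k) *\<^sub>R C k)"

definition Lmap :: "('l::finite \<Rightarrow> real^'n^'n) \<Rightarrow> real^'n \<Rightarrow> real^'l^'n" where
  "Lmap C v = (\<chi> i k. (C k *v v) $ i)"

definition qfun :: "('l::finite \<Rightarrow> real^'n^'n) \<Rightarrow> (real \<Rightarrow> real^'n) \<Rightarrow> (real \<Rightarrow> real^'n)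
                    \<Rightarrow> real \<Rightarrow> real \<Rightarrow> real^'l" where
  "qfun C z y \<tau> \<mu> = integral {\<mu>..\<tau>} (\<lambda>t. integral {\<mu>..\<tau>} (\<lambda>\<sigma>.
      transpose (Lmap C (z t - z \<sigma>)) *v (y t - y \<sigma>)))"

definition Qfun :: "('l::finite \<Rightarrow> real^'n^'n) \<Rightarrow> (real \<Rightarrow> real^'n)
                    \<Rightarrow> real \<Rightarrow> real \<Rightarrow> real^'l^'l" where
  "Qfun C z \<tau> \<mu> = integral {\<mu>..\<tau>} (\<lambda>t. integral {\<mu>..\<tau>} (\<lambda>\<sigma>.
      transpose (Lmap C (z t - z \<sigma>)) ** Lmap C (z t - z \<sigma>)))"

text \<open>
  The solution of the hybrid closed-loop system on [0,+infinity), with event times tau,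
  state x, input u, parameter estimate th, for true parameter theta, initial
  conditions x(0)=x0, th(0)=th0, z(0)=0, w(0)=0 (z, w are given by integrals).
  Inf of the empty set is +infinity, encoded by the case distinction.
\<close>

definition hybrid_solution ::
  "real^'n^'n \<Rightarrow> real^'m^'n \<Rightarrow> ('l::finite \<Rightarrow> real^'n^'n) \<Rightarrow> (real^'l \<Rightarrow> real^'n^'m)
   \<Rightarrow> (real^'l \<Rightarrow> real) \<Rightarrow> real \<Rightarrow> real \<Rightarrow> nat
   \<Rightarrow> real^'l \<Rightarrow> real^'n \<Rightarrow> real^'l
   \<Rightarrow> (nat \<Rightarrow> real) \<Rightarrow> (real \<Rightarrow> real^'n) \<Rightarrow> (real \<Rightarrow> real^'m) \<Rightarrow> (real \<Rightarrow> real^'l) \<Rightarrow> bool" where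
  "hybrid_solution A B C K M a T N \<theta> x0 th0 \<tau> x u th \<longleftrightarrow>
     (let z = (\<lambda>t. integral {0..t} x);
          w = (\<lambda>t. integral {0..t} u);
          y = (\<lambda>t. x t - A *v z t - B *v w t);
          r = (\<lambda>i. if x (\<tau> i) = 0 then \<tau> i + T
                    else (let S = {t. t > \<tau> i \<and>
                                 norm (x t) = norm (x (\<tau> i)) * sqrt (a + (M (th (\<tau> i)))\<^sup>2)}
                          in if S = {} then \<tau> i + T else min (\<tau> i + T) (Inf S)));
          \<mu> = (\<lambda>i. Min (\<tau> ` {j. j \<le> i \<and> \<tau> j \<ge> \<tau> (Suc i) - real N * T}))
      in
        \<tau> 0 = 0
      \<and> (\<forall>i. \<tau> (Suc i) = min (\<tau> i + T) (r i))
      \<and> filterlim \<tau> at_top sequentially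
      \<and> x 0 = x0 \<and> th 0 = th0
      \<and> continuous_on {0..} x
      \<and> (\<forall>i. \<forall>t\<in>{\<tau> i..<\<tau> (Suc i)}.
            u t = K (th (\<tau> i)) *v x t
          \<and> th t = th (\<tau> i)
          \<and> (x has_vector_derivative (Apar A C \<theta> *v x t + B *v u t)) (at t within {\<tau> i..\<tau> (Suc i)}))
      \<and> (\<forall>i. qfun C z y (\<tau> (Suc i)) (\<mu> i) = Qfun C z (\<tau> (Suc i)) (\<mu> i) *v th (\<tau> (Suc i))
          \<and> (\<forall>v. qfun C z y (\<tau> (Suc i)) (\<mu> i) = Qfun C z (\<tau> (Suc i)) (\<mu> i) *v v
                 \<longrightarrow> (norm (th (\<tau> (Suc i)) - th (\<tau> i)))\<^sup>2 \<le> (norm (v - th (\<tau> i)))\<^sup>2)))"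

end

theory Submission
  imports Defs
begin


lemma matrix_add_rdistrib': "((A::real^'n^'m) + B) ** C = A ** C + B ** C"
  by (vector matrix_matrix_mult_def sum.distrib[symmetric] field_simps)

lemma mat1_diag: "(mat 1 :: real^'n^'n) $ i $ i = 1" by (simp add: mat_def)

lemma onorm_add_mat: "onorm ((*v) ((a::real^'n^'n) + b)) \<le> onorm ((*v) a) + onorm ((*v) b)"
proof -
  have "(*v) (a+b) = (\<lambda>x. a *v x + b *v x)" by (simp add: fun_eq_iff matrix_vector_mult_add_rdistrib)
  then show ?thesis
    using onorm_triangle[OF matrix_vector_mul_bounded_linear[of a] matrix_vector_mul_bounded_linear[of b]]
    by simp
qed

lemma onorm_scale_mat: "onorm ((*v) (r *\<^sub>R (a::real^'n^'n))) = \<bar>r\<bar> * onorm ((*v) a)"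
proof -
  have "(*v) (r *\<^sub>R a) = (\<lambda>x. r *\<^sub>R (a *v x))" by (simp add: fun_eq_iff scaleR_matrix_vector_assoc)
  then show ?thesis
    using onorm_scaleR[OF matrix_vector_mul_bounded_linear[of a], of r] by simp
qed

lemma onorm_mult_mat: "onorm ((*v) ((a::real^'n^'n) ** b)) \<le> onorm ((*v) a) * onorm ((*v) b)"
proof -
  have "(*v) (a ** b) = (*v) a o (*v) b" by (simp add: fun_eq_iff matrix_vector_mul_assoc)
  then show ?thesis
    using onorm_compose[OF matrix_vector_mul_bounded_linear[of a] matrix_vector_mul_bounded_linear[of b]]
    by simp
qed

lemma onorm_one_mat: "onorm ((*v) (mat 1 :: real^'n^'n)) = 1"
proof -
  have "(*v) (mat 1 :: real^'n^'n) = (\<lambda>x. x)" by (simp add: fun_eq_iff)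
  then show ?thesis by (simp add: onorm_id)
qed

typedef ('n::finite) sqm = "UNIV :: (real^'n^'n) set" morphisms mrep Sq by simp
setup_lifting type_definition_sqm

instantiation sqm :: (finite) real_algebra_1
begin
lift_definition zero_sqm :: "'a sqm" is "0" .
lift_definition one_sqm :: "'a sqm" is "mat 1" .
lift_definition plus_sqm :: "'a sqm \<Rightarrow> 'a sqm \<Rightarrow> 'a sqm" is "(+)" .
lift_definition minus_sqm :: "'a sqm \<Rightarrow> 'a sqm \<Rightarrow> 'a sqm" is "(-)" .
lift_definition uminus_sqm :: "'a sqm \<Rightarrow> 'a sqm" is "uminus" .
lift_definition times_sqm :: "'a sqm \<Rightarrow> 'a sqm \<Rightarrow> 'a sqm" is "(**)" .
lift_definition scaleR_sqm :: "real \<Rightarrow> 'a sqm \<Rightarrow> 'a sqm" is "(*\<^sub>R)" .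
instance
proof
  fix a b c :: "'a sqm" and r s :: real
  show "a + b + c = a + (b + c)" by transfer (simp add: algebra_simps)
  show "a + b = b + a" by transfer (simp add: algebra_simps)
  show "0 + a = a" by transfer simp
  show "- a + a = 0" by transfer simp
  show "a - b = a + - b" by transfer simp
  show "r *\<^sub>R (a + b) = r *\<^sub>R a + r *\<^sub>R b" by transfer (simp add: algebra_simps)
  show "(r + s) *\<^sub>R a = r *\<^sub>R a + s *\<^sub>R a" by transfer (simp add: algebra_simps)
  show "r *\<^sub>R s *\<^sub>R a = (r * s) *\<^sub>R a" by transfer simp
  show "1 *\<^sub>R a = a" by transfer simp
  show "a * b * c = a * (b * c)" by transfer (simp add: matrix_mul_assoc)
  show "(a + b) * c = a * c + b * c" by transfer (simp add: matrix_add_rdistrib')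
  show "a * (b + c) = a * b + a * c" by transfer (simp add: matrix_add_ldistrib)
  show "r *\<^sub>R a * b = r *\<^sub>R (a * b)" by transfer (simp add: scalar_matrix_assoc)
  show "a * r *\<^sub>R b = r *\<^sub>R (a * b)" by transfer (simp add: matrix_scalar_ac scalar_matrix_assoc)
  show "1 * a = a" by transfer simp
  show "a * 1 = a" by transfer simp
  show "(0::'a sqm) \<noteq> 1" apply transfer
    by (metis mat1_diag zero_index zero_neq_one)
qed
end

instantiation sqm :: (finite) real_normed_algebra_1
begin
lift_definition norm_sqm :: "'a sqm \<Rightarrow> real" is "\<lambda>A. onorm ((*v) A)" .
definition sgn_sqm :: "'a sqm \<Rightarrow> 'a sqm" where "sgn_sqm x = x /\<^sub>R norm x"
definition dist_sqm :: "'a sqm \<Rightarrow> 'a sqm \<Rightarrow> real" where "dist_sqm x y = norm (x - y)"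
definition uniformity_sqm :: "('a sqm \<times> 'a sqm) filter" where
  "uniformity_sqm = (INF e\<in>{0 <..}. principal {(x, y). dist x y < e})"
definition open_sqm :: "'a sqm set \<Rightarrow> bool" where
  "open_sqm U \<longleftrightarrow> (\<forall>x\<in>U. eventually (\<lambda>(x', y). x' = x \<longrightarrow> y \<in> U) uniformity)"
instance
proof
  fix a b :: "'a sqm" and r :: real
  show "(norm a = 0) = (a = 0)" apply transfer
    apply (subst onorm_eq_0) apply simp
    by (simp add: matrix_eq)
  show "norm (a + b) \<le> norm a + norm b" by transfer (rule onorm_add_mat)
  show "norm (r *\<^sub>R a) = \<bar>r\<bar> * norm a" by transfer (rule onorm_scale_mat)
  show "norm (a * b) \<le> norm a * norm b" by transfer (rule onorm_mult_mat)
  show "norm (1::'a sqm) = 1" by transfer (rule onorm_one_mat)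
qed (simp_all add: sgn_sqm_def dist_sqm_def uniformity_sqm_def open_sqm_def)
end


lemma frob_le_onorm: "norm (A::real^'n^'n) \<le> real CARD('n) * real CARD('n) * onorm ((*v) A)"
proof -
  have "norm A \<le> (\<Sum>i\<in>UNIV. norm (A $ i))"
    unfolding norm_vec_def by (rule L2_set_le_sum) simp
  also have "\<dots> \<le> (\<Sum>i\<in>UNIV. \<Sum>j\<in>UNIV. \<bar>A $ i $ j\<bar>)"
    by (intro sum_mono norm_le_l1_cart)
  also have "\<dots> \<le> (\<Sum>i\<in>(UNIV::'n set). \<Sum>j\<in>(UNIV::'n set). onorm ((*v) A))"
    by (intro sum_mono matrix_component_le_onorm)
  also have "\<dots> = real CARD('n) * real CARD('n) * onorm ((*v) A)" by simp
  finally show ?thesis .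
qed

lemma onorm_le_frob: "onorm ((*v) (A::real^'n^'n)) \<le> real CARD('n) * real CARD('n) * norm A"
proof (rule onorm_le_matrix_component)
  fix i j
  have "\<bar>A $ i $ j\<bar> \<le> norm (A $ i)" by (rule component_le_norm_cart)
  also have "\<dots> \<le> norm A" by (rule Finite_Cartesian_Product.norm_nth_le)
  finally show "\<bar>A $ i $ j\<bar> \<le> norm A" .
qed

lemma norm_mrep: "norm (mrep s) \<le> real CARD('n) * real CARD('n) * norm (s::'n::finite sqm)"
  by (simp add: norm_sqm.rep_eq frob_le_onorm)

lemma norm_sqm_le: "norm (s::'n::finite sqm) \<le> real CARD('n) * real CARD('n) * norm (mrep s)"
  by (simp add: norm_sqm.rep_eq onorm_le_frob)

lemma bounded_linear_mrep: "bounded_linear (mrep :: 'n::finite sqm \<Rightarrow> real^'n^'n)"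
proof (rule bounded_linear_intro)
  fix x y :: "'n sqm" and r :: real
  show "mrep (x + y) = mrep x + mrep y" by (simp add: plus_sqm.rep_eq)
  show "mrep (r *\<^sub>R x) = r *\<^sub>R mrep x" by (simp add: scaleR_sqm.rep_eq)
  show "norm (mrep x) \<le> norm x * (real CARD('n) * real CARD('n))"
    using norm_mrep[of x] by (simp add: mult.commute)
qed

instance sqm :: (finite) banach
proof
  fix X :: "nat \<Rightarrow> 'a sqm"
  assume X: "Cauchy X"
  define c where "c = real CARD('a) * real CARD('a)"
  have c: "c > 0" by (simp add: c_def)
  have "Cauchy (\<lambda>n. mrep (X n))"
  proof (rule metric_CauchyI)
    fix e :: real assume e: "e > 0"
    then obtain M where M: "\<forall>m\<ge>M. \<forall>n\<ge>M. dist (X m) (X n) < e / c"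
      using X c unfolding Cauchy_def by (meson divide_pos_pos)
    show "\<exists>M. \<forall>m\<ge>M. \<forall>n\<ge>M. dist (mrep (X m)) (mrep (X n)) < e"
    proof (intro exI allI impI)
      fix m n assume "M \<le> m" "M \<le> n"
      then have "norm (X m - X n) < e / c" using M by (simp add: dist_sqm_def)
      moreover have "dist (mrep (X m)) (mrep (X n)) \<le> c * norm (X m - X n)"
        using norm_mrep[of "X m - X n"] by (simp add: dist_norm minus_sqm.rep_eq c_def)
      ultimately show "dist (mrep (X m)) (mrep (X n)) < e"
        using c by (simp add: field_simps)
    qed
  qed
  then obtain L where L: "(\<lambda>n. mrep (X n)) \<longlonglongrightarrow> L"
    using convergent_def Cauchy_convergent_iff by blast
  have "(\<lambda>n. X n - Sq L) \<longlonglongrightarrow> 0"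
  proof (rule Lim_null_comparison)
    show "\<forall>\<^sub>F n in sequentially. norm (X n - Sq L) \<le> c * norm (mrep (X n) - L)"
    proof (intro always_eventually allI)
      fix n
      show "norm (X n - Sq L) \<le> c * norm (mrep (X n) - L)"
        using norm_sqm_le[of "X n - Sq L"] by (simp add: minus_sqm.rep_eq Sq_inverse c_def)
    qed
    have "(\<lambda>n. mrep (X n) - L) \<longlonglongrightarrow> 0" using L by (rule LIM_zero)
    then show "(\<lambda>n. c * norm (mrep (X n) - L)) \<longlonglongrightarrow> 0"
      by (simp add: tendsto_mult_right_zero tendsto_norm_zero)
  qed
  then have "X \<longlonglongrightarrow> Sq L" by (rule LIM_zero_cancel)
  then show "convergent X" by (auto simp: convergent_def)
qed

lemma mrep_pow: "mat_pow F k = mrep ((Sq F) ^ k)"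
  by (induct k) (simp_all add: one_sqm.rep_eq times_sqm.rep_eq Sq_inverse)

lemma mat_exp_sqm: "mat_exp F = mrep (exp (Sq F))"
proof -
  have "mrep (exp (Sq F)) = mrep (\<Sum>k. (1 / fact k) *\<^sub>R (Sq F ^ k))"
    by (simp add: exp_def scaleR_conv_of_real divide_inverse mult.commute)
  also have "\<dots> = (\<Sum>k. mrep ((1 / fact k) *\<^sub>R (Sq F ^ k)))"
    using bounded_linear.suminf[OF bounded_linear_mrep summable_exp_generic[of "Sq F"]]
    by (simp add: divide_inverse mult.commute)
  also have "\<dots> = mat_exp F"
    by (simp add: mat_exp_def scaleR_sqm.rep_eq mrep_pow)
  finally show ?thesis by simp
qed

lemma mat_norm_mrep: "mat_norm (mrep s) = norm s"
  by (simp add: mat_norm_def norm_sqm.rep_eq)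



definition app :: "'n::finite sqm \<Rightarrow> real^'n \<Rightarrow> real^'n" where "app A v = mrep A *v v"

lemma mvneg: "(- A) *v (x::real^'n) = - (A *v x)" for A :: "real^'n^'m"
  by (simp add: vec_eq_iff matrix_vector_mult_def sum_negf)

lemma bb_app: "bounded_bilinear app"
proof
  fix a a' b b' and r :: real
  show "app (a + a') b = app a b + app a' b" by (simp add: app_def plus_sqm.rep_eq matrix_vector_mult_add_rdistrib)
  show "app a (b + b') = app a b + app a b'" by (simp add: app_def matrix_vector_right_distrib)
  show "app (r *\<^sub>R a) b = r *\<^sub>R app a b" by (simp add: app_def scaleR_sqm.rep_eq scaleR_matrix_vector_assoc)
  show "app a (r *\<^sub>R b) = r *\<^sub>R app a b" by (simp add: app_def matrix_scaleR_vector_ac scaleR_matrix_vector_assoc)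
  show "\<exists>K. \<forall>a b. norm (app a b) \<le> norm a * norm b * K"
    by (rule exI[of _ 1]) (simp add: app_def norm_sqm.rep_eq onorm[OF matrix_vector_mul_bounded_linear])
qed

lemma exp_deriv_rev:
  "((\<lambda>r. exp ((t - r) *\<^sub>R G)) has_vector_derivative - (exp ((t - r) *\<^sub>R G) * G)) (at r)"
proof -
  have d1: "((\<lambda>r. t - r) has_vector_derivative (-1)) (at r)"
    by (auto intro!: derivative_eq_intros simp: has_vector_derivative_def has_field_derivative_def[symmetric])
  have "(((\<lambda>u. exp (u *\<^sub>R G)) \<circ> (\<lambda>r. t - r)) has_vector_derivative ((-1) *\<^sub>R (exp ((t - r) *\<^sub>R G) * G))) (at r)"
    by (rule vector_diff_chain_at[OF d1 exp_scaleR_has_vector_derivative_right])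
  then show ?thesis by (simp add: o_def)
qed

lemma ode_rep_sqm:
  fixes G :: "'n::finite sqm" and x :: "real \<Rightarrow> real^'n"
  assumes st: "s \<le> t" and cont: "continuous_on {s..t} x"
    and der: "\<And>r. r \<in> {s<..<t} \<Longrightarrow> (x has_vector_derivative app G (x r)) (at r)"
  shows "x t = app (exp ((t - s) *\<^sub>R G)) (x s)"
proof -
  define g where "g r = app (exp ((t - r) *\<^sub>R G)) (x r)" for r
  have dh: "((\<lambda>r. exp ((t - r) *\<^sub>R G)) has_vector_derivative - (exp ((t - r) *\<^sub>R G) * G)) (at r)" for r
    by (rule exp_deriv_rev)
  have "continuous_on {s..t} (\<lambda>r. exp ((t - r) *\<^sub>R G))"
    by (intro continuous_at_imp_continuous_on ballI has_vector_derivative_continuous[OF dh])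
  then have gc: "continuous_on {s..t} g"
    unfolding g_def by (rule bounded_bilinear.continuous_on[OF bb_app _ cont])
  have gd: "(g has_vector_derivative 0) (at r)" if "r \<in> {s<..<t}" for r
  proof -
    have "(g has_vector_derivative (app (exp ((t - r) *\<^sub>R G)) (app G (x r)) + app (- (exp ((t - r) *\<^sub>R G) * G)) (x r))) (at r)"
      unfolding g_def by (rule bounded_bilinear.has_vector_derivative[OF bb_app dh der[OF that]])
    moreover have "app (exp ((t - r) *\<^sub>R G)) (app G (x r)) + app (- (exp ((t - r) *\<^sub>R G) * G)) (x r) = 0"
      by (simp add: app_def times_sqm.rep_eq uminus_sqm.rep_eq matrix_vector_mul_assoc mvneg)
    ultimately show ?thesis by simp
  qed
  have "((\<lambda>r. 0) has_integral (g t - g s)) {s..t}"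
    by (rule fundamental_theorem_of_calculus_interior[OF st gc gd])
  then have "g t - g s = 0" by (simp add: has_integral_0_eq)
  then have "g t = g s" by simp
  then show ?thesis by (simp add: g_def app_def one_sqm.rep_eq)
qed



lemma Sq_scaleR: "Sq (r *\<^sub>R F) = r *\<^sub>R Sq F"
  by (simp add: scaleR_sqm.abs_eq)

lemma app_Sq: "app (Sq F) v = F *v v"
  by (simp add: app_def Sq_inverse)

lemma mat_exp_scale: "mat_exp (r *\<^sub>R F) = mrep (exp (r *\<^sub>R Sq F))"
  by (simp add: mat_exp_sqm Sq_scaleR)

lemma mat_exp_zero: "mat_exp (0 *\<^sub>R F) = mat 1"
  by (simp add: mat_exp_sqm zero_sqm.abs_eq[symmetric] one_sqm.rep_eq)

lemma mat_exp_add: "mat_exp (r *\<^sub>R F) ** mat_exp (s *\<^sub>R F) = mat_exp ((r + s) *\<^sub>R F)"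
proof -
  have "exp ((r + s) *\<^sub>R Sq F) = exp (r *\<^sub>R Sq F) * exp (s *\<^sub>R Sq F)"
    by (simp add: scaleR_add_left exp_add_commuting)
  then show ?thesis by (simp add: mat_exp_scale times_sqm.rep_eq)
qed

lemma ode_rep:
  fixes F :: "real^'n^'n" and x :: "real \<Rightarrow> real^'n"
  assumes st: "s \<le> t" and cont: "continuous_on {s..t} x"
    and der: "\<And>r. r \<in> {s<..<t} \<Longrightarrow> (x has_vector_derivative F *v x r) (at r)"
  shows "x t = mat_exp ((t - s) *\<^sub>R F) *v x s"
proof -
  have "x t = app (exp ((t - s) *\<^sub>R Sq F)) (x s)"
    by (rule ode_rep_sqm[OF st cont]) (simp add: app_Sq der)
  then show ?thesis by (simp add: app_def mat_exp_scale)
qed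

lemma bl_mv: "bounded_linear (\<lambda>M::real^'a^'b. M *v v)"
  by (simp add: linear_conv_bounded_linear[symmetric] linear_iff matrix_vector_mult_add_rdistrib
      scaleR_matrix_vector_assoc)

lemma Lmap_mult: "Lmap C v *v th = (\<Sum>k\<in>UNIV. (th $ k) *\<^sub>R C k) *v v"
proof -
  have "(\<Sum>k\<in>UNIV. (th $ k) *\<^sub>R C k) *v v = (\<Sum>k\<in>UNIV. (th $ k) *\<^sub>R (C k *v v))"
    using linear_sum[OF bounded_linear.linear[OF bl_mv[of v]], of "\<lambda>k. (th $ k) *\<^sub>R C k" UNIV]
    by (simp add: o_def scaleR_matrix_vector_assoc)
  moreover have "Lmap C v *v th = (\<Sum>k\<in>UNIV. (th $ k) *\<^sub>R (C k *v v))"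
    unfolding vec_eq_iff
  proof
    fix i
    show "(Lmap C v *v th) $ i = (\<Sum>k\<in>UNIV. (th $ k) *\<^sub>R (C k *v v)) $ i"
      by (simp add: Lmap_def matrix_vector_mult_def sum_component mult.commute)
  qed
  ultimately show ?thesis by simp
qed

lemma bl_Lmap: "bounded_linear (Lmap C)"
  unfolding linear_conv_bounded_linear[symmetric]
  by (simp add: linear_iff Lmap_def vec_eq_iff matrix_vector_right_distrib matrix_scaleR_vector_ac
      scaleR_matrix_vector_assoc[symmetric])

lemma cont_Phi: "continuous_on S (\<lambda>v. transpose (Lmap C v) ** Lmap C v)"
proof -
  have "continuous_on S (Lmap C)"
    using bl_Lmap linear_continuous_on by blast
  then show ?thesis
    unfolding matrix_matrix_mult_def transpose_def
    by (intro continuous_intros) 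
qed

lemma dbl_lin:
  fixes G :: "real \<Rightarrow> real \<Rightarrow> 'a::euclidean_space" and h :: "'a \<Rightarrow> 'b::euclidean_space"
  assumes h: "bounded_linear h"
    and cG: "continuous_on ({m..t} \<times> {m..t}) (\<lambda>(p, q). G p q)"
  shows "integral {m..t} (\<lambda>p. integral {m..t} (\<lambda>q. h (G p q)))
       = h (integral {m..t} (\<lambda>p. integral {m..t} (\<lambda>q. G p q)))"
proof -
  have ci: "continuous_on {m..t} (G p)" if "p \<in> {m..t}" for p
  proof -
    have "continuous_on {m..t} ((\<lambda>(p, q). G p q) \<circ> (\<lambda>q. (p, q)))"
      by (rule continuous_on_compose[OF _ continuous_on_subset[OF cG]])
         (use that in \<open>auto intro!: continuous_intros\<close>)
    then show ?thesis by (simp add: o_def)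
  qed
  have inner: "integral {m..t} (\<lambda>q. h (G p q)) = h (integral {m..t} (G p))" if "p \<in> {m..t}" for p
    using integral_linear[OF integrable_continuous_interval[OF ci[OF that]] h] by (simp add: o_def)
  have co: "continuous_on {m..t} (\<lambda>p. integral (cbox m t) (G p))"
    by (rule integral_continuous_on_param) (use cG in \<open>simp add: cbox_interval\<close>)
  have "integral {m..t} (\<lambda>p. integral {m..t} (\<lambda>q. h (G p q))) = integral {m..t} (\<lambda>p. h (integral {m..t} (G p)))"
    by (rule integral_cong) (simp add: inner)
  also have "\<dots> = h (integral {m..t} (\<lambda>p. integral {m..t} (G p)))"
    using integral_linear[OF integrable_continuous_interval[OF co[unfolded cbox_interval]] h] by (simp add: o_def)
  finally show ?thesis by simp
qed



locale hs =
  fixes A :: "real^'n::finite^'n" and B :: "real^'m::finite^'n" and C :: "'l::finite \<Rightarrow> real^'n^'n"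
    and K :: "real^'l \<Rightarrow> real^'n^'m" and M :: "real^'l \<Rightarrow> real"
    and a T :: real and N :: nat and \<theta> :: "real^'l" and x0 :: "real^'n" and th0 :: "real^'l"
    and \<tau> :: "nat \<Rightarrow> real" and x :: "real \<Rightarrow> real^'n" and u :: "real \<Rightarrow> real^'m" and th :: "real \<Rightarrow> real^'l"
  assumes hyb: "hybrid_solution A B C K M a T N \<theta> x0 th0 \<tau> x u th"
    and a_pos: "a > 0" and T_pos: "T > 0" and N_gt1: "N > 1" and M_ge1: "\<And>v. M v \<ge> 1"
begin

definition zf :: "real \<Rightarrow> real^'n" where "zf t = integral {0..t} x"
definition wf :: "real \<Rightarrow> real^'m" where "wf t = integral {0..t} u"
definition yf :: "real \<Rightarrow> real^'n" where "yf t = x t - A *v zf t - B *v wf t"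
definition cc :: "nat \<Rightarrow> real" where "cc i = sqrt (a + (M (th (\<tau> i)))\<^sup>2)"
definition Ss :: "nat \<Rightarrow> real set" where
  "Ss i = {t. t > \<tau> i \<and> norm (x t) = norm (x (\<tau> i)) * cc i}"
definition rr :: "nat \<Rightarrow> real" where
  "rr i = (if x (\<tau> i) = 0 then \<tau> i + T else if Ss i = {} then \<tau> i + T else min (\<tau> i + T) (Inf (Ss i)))"
definition mu :: "nat \<Rightarrow> real" where
  "mu i = Min (\<tau> ` {j. j \<le> i \<and> \<tau> j \<ge> \<tau> (Suc i) - real N * T})"
definition Fm :: "nat \<Rightarrow> real^'n^'n" where "Fm i = Apar A C \<theta> + B ** K (th (\<tau> i))"

lemma tau0: "\<tau> 0 = 0"
  using hyb unfolding hybrid_solution_def Let_def by blast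

lemma tauS: "\<tau> (Suc i) = min (\<tau> i + T) (rr i)"
  using hyb unfolding hybrid_solution_def Let_def rr_def Ss_def cc_def by blast

lemma tau_lim: "filterlim \<tau> at_top sequentially"
  using hyb unfolding hybrid_solution_def Let_def by blast

lemma x_0: "x 0 = x0" and th_0: "th 0 = th0"
  using hyb unfolding hybrid_solution_def Let_def by blast+

lemma x_cont: "continuous_on {0..} x"
  using hyb unfolding hybrid_solution_def Let_def by blast

lemma interval_facts:
  assumes "t \<in> {\<tau> i..<\<tau> (Suc i)}"
  shows "u t = K (th (\<tau> i)) *v x t" "th t = th (\<tau> i)"
    "(x has_vector_derivative (Apar A C \<theta> *v x t + B *v u t)) (at t within {\<tau> i..\<tau> (Suc i)})"
  using hyb assms unfolding hybrid_solution_def Let_def by blast+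

lemma update:
  "qfun C zf yf (\<tau> (Suc i)) (mu i) = Qfun C zf (\<tau> (Suc i)) (mu i) *v th (\<tau> (Suc i))"
  "qfun C zf yf (\<tau> (Suc i)) (mu i) = Qfun C zf (\<tau> (Suc i)) (mu i) *v v
     \<Longrightarrow> (norm (th (\<tau> (Suc i)) - th (\<tau> i)))\<^sup>2 \<le> (norm (v - th (\<tau> i)))\<^sup>2"
  using hyb unfolding hybrid_solution_def Let_def zf_def[abs_def] yf_def[abs_def] wf_def[abs_def] mu_def
  by blast+


lemma cc_gt1: "cc i > 1"
proof -
  have "1 \<le> (M (th (\<tau> i)))\<^sup>2" using M_ge1[of "th (\<tau> i)"] by (simp add: one_le_power)
  then have "1\<^sup>2 < a + (M (th (\<tau> i)))\<^sup>2" using a_pos by simp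
  then show ?thesis unfolding cc_def by (rule real_less_rsqrt)
qed

lemma rr_gt: assumes t0: "0 \<le> \<tau> i" shows "\<tau> i < rr i"
proof (cases "x (\<tau> i) = 0 \<or> Ss i = {}")
  case True then show ?thesis using T_pos by (auto simp: rr_def)
next
  case False
  then have nz: "x (\<tau> i) \<noteq> 0" and ne: "Ss i \<noteq> {}" by auto
  define e where "e = norm (x (\<tau> i)) * (cc i - 1)"
  have e: "e > 0" using nz cc_gt1[of i] by (simp add: e_def)
  obtain d where d: "d > 0" and dd: "\<forall>t\<in>{0..}. dist t (\<tau> i) < d \<longrightarrow> dist (x t) (x (\<tau> i)) < e"
    using x_cont t0 e unfolding continuous_on_iff by (metis atLeast_iff)
  have lb: "\<tau> i + d \<le> t" if "t \<in> Ss i" for t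
  proof (rule ccontr)
    assume "\<not> \<tau> i + d \<le> t"
    moreover have tt: "t > \<tau> i" and eq: "norm (x t) = norm (x (\<tau> i)) * cc i" using that by (auto simp: Ss_def)
    ultimately have "dist t (\<tau> i) < d" by (simp add: dist_real_def)
    moreover have "t \<in> {0..}" using tt t0 by simp
    ultimately have "dist (x t) (x (\<tau> i)) < e" using dd by blast
    moreover have "norm (x t) \<le> norm (x (\<tau> i)) + dist (x t) (x (\<tau> i))"
      by (metis dist_commute dist_norm norm_triangle_sub add.commute)
    ultimately have "norm (x t) < norm (x (\<tau> i)) * cc i" by (simp add: e_def algebra_simps)
    then show False using eq by simp
  qed
  have "\<tau> i + d \<le> Inf (Ss i)" using ne lb by (intro cInf_greatest) auto
  then show ?thesis using nz ne d T_pos by (simp add: rr_def)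
qed

lemma tau_props: "0 \<le> \<tau> i \<and> \<tau> i < \<tau> (Suc i) \<and> \<tau> (Suc i) \<le> \<tau> i + T"
proof (induct i)
  case 0
  then show ?case using rr_gt[of 0] tauS[of 0] tau0 T_pos by simp
next
  case (Suc i)
  then have "0 \<le> \<tau> (Suc i)" by simp
  then show ?case using rr_gt[of "Suc i"] tauS[of "Suc i"] T_pos by simp
qed

lemma tau_nonneg: "0 \<le> \<tau> i" and tau_less: "\<tau> i < \<tau> (Suc i)" and tau_leT: "\<tau> (Suc i) \<le> \<tau> i + T"
  using tau_props by auto

lemma tau_mono: "i \<le> j \<Longrightarrow> \<tau> i \<le> \<tau> j"
  by (induct j) (auto simp: le_Suc_eq intro: order_trans[OF _ less_imp_le[OF tau_less]])

lemma tau1_le: "\<tau> 1 \<le> T" using tau_leT[of 0] tau0 by simp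

lemma exists_interval:
  assumes "0 \<le> t" shows "\<exists>i. \<tau> i \<le> t \<and> t < \<tau> (Suc i)"
proof -
  have "eventually (\<lambda>n. t + 1 \<le> \<tau> n) sequentially"
    using tau_lim unfolding filterlim_at_top by blast
  then obtain N0 where "\<forall>n\<ge>N0. t + 1 \<le> \<tau> n" unfolding eventually_sequentially by blast
  then have n: "t < \<tau> N0" by force
  define n0 where "n0 = (LEAST n. t < \<tau> n)"
  have n0: "t < \<tau> n0" unfolding n0_def by (rule LeastI[of _ N0]) (rule n)
  have "n0 \<noteq> 0"
  proof
    assume "n0 = 0" then show False using n0 tau0 assms by simp
  qed
  then obtain i where i: "n0 = Suc i" by (cases n0) auto
  have "\<not> t < \<tau> i" using not_less_Least[of i "\<lambda>n. t < \<tau> n"] i unfolding n0_def by simp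
  then show ?thesis using n0 i by (intro exI[of _ i]) simp
qed

lemma ode_interval:
  assumes t: "t \<in> {\<tau> i..\<tau> (Suc i)}"
  shows "x t = mat_exp ((t - \<tau> i) *\<^sub>R Fm i) *v x (\<tau> i)"
proof (rule ode_rep)
  show "\<tau> i \<le> t" using t by simp
  show "continuous_on {\<tau> i..t} x"
    by (rule continuous_on_subset[OF x_cont]) (use tau_nonneg[of i] in auto)
  fix r assume r: "r \<in> {\<tau> i<..<t}"
  then have r': "r \<in> {\<tau> i..<\<tau> (Suc i)}" using t by auto
  have "(x has_vector_derivative (Apar A C \<theta> *v x r + B *v u r)) (at r within {\<tau> i..\<tau> (Suc i)})"
    by (rule interval_facts(3)[OF r'])
  moreover have "at r within {\<tau> i..\<tau> (Suc i)} = at r"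
    by (rule at_within_interior) (use r t in auto)
  moreover have "Apar A C \<theta> *v x r + B *v u r = Fm i *v x r"
    by (simp add: interval_facts(1)[OF r'] Fm_def matrix_vector_mult_add_rdistrib matrix_vector_mul_assoc)
  ultimately show "(x has_vector_derivative Fm i *v x r) (at r)" by simp
qed

lemma trigger_bound:
  assumes nz: "x (\<tau> i) \<noteq> 0" and t: "t \<in> {\<tau> i..\<tau> (Suc i)}"
  shows "norm (x t) \<le> norm (x (\<tau> i)) * cc i"
proof (rule ccontr)
  assume H: "\<not> ?thesis"
  have lt0: "norm (x (\<tau> i)) < norm (x (\<tau> i)) * cc i" using nz cc_gt1[of i] by simp
  have cont: "continuous_on {\<tau> i..t} (\<lambda>s. norm (x s))"
    by (intro continuous_on_norm continuous_on_subset[OF x_cont]) (use tau_nonneg[of i] in auto)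
  obtain s where s: "\<tau> i \<le> s" "s \<le> t" "norm (x s) = norm (x (\<tau> i)) * cc i"
    using IVT'[of "\<lambda>s. norm (x s)" "\<tau> i" "norm (x (\<tau> i)) * cc i" t] lt0 H t cont by auto
  have "s \<noteq> \<tau> i" using s lt0 by auto
  moreover have "s \<noteq> t" using s H by auto
  ultimately have s2: "\<tau> i < s" "s < t" using s by auto
  then have sS: "s \<in> Ss i" using s by (simp add: Ss_def)
  have "bdd_below (Ss i)" unfolding bdd_below_def Ss_def by (rule exI[of _ "\<tau> i"]) auto
  then have "Inf (Ss i) \<le> s" by (rule cInf_lower[OF sS])
  then have "rr i \<le> s" using sS nz by (auto simp: rr_def)
  then have "\<tau> (Suc i) \<le> s" using tauS[of i] by simp
  then show False using s2 t by simp
qed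

lemma x0_zero_tau: assumes "x0 = 0" shows "x (\<tau> i) = 0"
proof (induct i)
  case 0 then show ?case using assms x_0 tau0 by simp
next
  case (Suc i)
  have "x (\<tau> (Suc i)) = mat_exp ((\<tau> (Suc i) - \<tau> i) *\<^sub>R Fm i) *v x (\<tau> i)"
    by (rule ode_interval) (use tau_less[of i] in auto)
  then show ?case using Suc by simp
qed

lemma x0_zero: assumes "x0 = 0" "0 \<le> t" shows "x t = 0"
proof -
  obtain i where i: "\<tau> i \<le> t" "t < \<tau> (Suc i)" using exists_interval[OF assms(2)] by blast
  have "x t = mat_exp ((t - \<tau> i) *\<^sub>R Fm i) *v x (\<tau> i)"
    by (rule ode_interval) (use i in auto)
  then show ?thesis using x0_zero_tau[OF assms(1)] by simp
qed


lemma deriv_interior: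
  assumes r: "r \<in> {\<tau> i<..<\<tau> (Suc i)}"
  shows "(x has_vector_derivative (Apar A C \<theta> *v x r + B *v u r)) (at r)"
proof -
  have r': "r \<in> {\<tau> i..<\<tau> (Suc i)}" using r by auto
  have "(x has_vector_derivative (Apar A C \<theta> *v x r + B *v u r)) (at r within {\<tau> i..\<tau> (Suc i)})"
    by (rule interval_facts(3)[OF r'])
  moreover have "at r within {\<tau> i..\<tau> (Suc i)} = at r"
    by (rule at_within_interior) (use r in auto)
  ultimately show ?thesis by simp
qed

lemma ftc_pieces:
  "\<forall>t\<in>{0..\<tau> i}. u integrable_on {0..t} \<and>
     ((\<lambda>s. Apar A C \<theta> *v x s + B *v u s) has_integral (x t - x 0)) {0..t}"
proof (induct i)
  case 0
  have e: "{0..0::real} = cbox 0 0" by (simp add: cbox_interval)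
  have "u integrable_on {0..0}" unfolding e by (rule integrable_on_refl)
  moreover have "((\<lambda>s. Apar A C \<theta> *v x s + B *v u s) has_integral 0) {0..0}"
    unfolding e by (rule has_integral_refl)
  ultimately show ?case using tau0 by simp
next
  case (Suc i)
  show ?case
  proof
    fix t assume t: "t \<in> {0..\<tau> (Suc i)}"
    show "u integrable_on {0..t} \<and> ((\<lambda>s. Apar A C \<theta> *v x s + B *v u s) has_integral (x t - x 0)) {0..t}"
    proof (cases "t \<le> \<tau> i")
      case True then show ?thesis using Suc t by auto
    next
      case False
      have ti: "\<tau> i \<le> t" "t \<le> \<tau> (Suc i)" using False t by auto
      have IH: "u integrable_on {0..\<tau> i}"
        "((\<lambda>s. Apar A C \<theta> *v x s + B *v u s) has_integral (x (\<tau> i) - x 0)) {0..\<tau> i}"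
        using Suc tau_nonneg[of i] by auto
      have cx: "continuous_on {\<tau> i..t} x"
        by (rule continuous_on_subset[OF x_cont]) (use tau_nonneg[of i] in auto)
      have p1: "((\<lambda>s. Apar A C \<theta> *v x s + B *v u s) has_integral (x t - x (\<tau> i))) {\<tau> i..t}"
        by (rule fundamental_theorem_of_calculus_interior[OF ti(1) cx deriv_interior]) (use ti in auto)
      have ck: "continuous_on {\<tau> i..t} (\<lambda>s. K (th (\<tau> i)) *v x s)"
        by (rule bounded_linear.continuous_on[OF matrix_vector_mul_bounded_linear cx])
      have p2: "u integrable_on {\<tau> i..t}"
      proof (rule integrable_spike_finite[of "{t}"])
        show "(\<lambda>s. K (th (\<tau> i)) *v x s) integrable_on {\<tau> i..t}"
          by (rule integrable_continuous_interval[OF ck])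
        fix s assume "s \<in> {\<tau> i..t} - {t}"
        then have "s \<in> {\<tau> i..<\<tau> (Suc i)}" using ti by auto
        then show "u s = K (th (\<tau> i)) *v x s" by (rule interval_facts(1))
      qed simp
      have "u integrable_on {0..t}"
        by (rule Henstock_Kurzweil_Integration.integrable_combine[OF tau_nonneg ti(1) IH(1) p2])
      moreover have "((\<lambda>s. Apar A C \<theta> *v x s + B *v u s) has_integral (x (\<tau> i) - x 0 + (x t - x (\<tau> i)))) {0..t}"
        by (rule has_integral_combine[OF tau_nonneg ti(1) IH(2) p1])
      ultimately show ?thesis by simp
    qed
  qed
qed

lemma x_eq: assumes t: "0 \<le> t" shows "x t - x0 = Apar A C \<theta> *v zf t + B *v wf t"
proof -
  obtain i where i: "\<tau> i \<le> t" "t < \<tau> (Suc i)" using exists_interval[OF t] by blast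
  then have "t \<in> {0..\<tau> (Suc i)}" using t by auto
  then have ui: "u integrable_on {0..t}"
    and h1: "((\<lambda>s. Apar A C \<theta> *v x s + B *v u s) has_integral (x t - x 0)) {0..t}"
    using ftc_pieces[of "Suc i"] by auto
  have xi: "x integrable_on {0..t}"
    by (rule integrable_continuous_interval, rule continuous_on_subset[OF x_cont]) auto
  have a1: "((\<lambda>s. Apar A C \<theta> *v x s) has_integral (Apar A C \<theta> *v zf t)) {0..t}"
    using has_integral_linear[OF integrable_integral[OF xi] matrix_vector_mul_bounded_linear]
    by (simp add: o_def zf_def)
  have a2: "((\<lambda>s. B *v u s) has_integral (B *v wf t)) {0..t}"
    using has_integral_linear[OF integrable_integral[OF ui] matrix_vector_mul_bounded_linear]
    by (simp add: o_def wf_def)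
  have "((\<lambda>s. Apar A C \<theta> *v x s + B *v u s) has_integral (Apar A C \<theta> *v zf t + B *v wf t)) {0..t}"
    by (rule has_integral_add[OF a1 a2])
  then show ?thesis using has_integral_unique[OF h1] x_0 by simp
qed

lemma y_diff:
  assumes "0 \<le> t" "0 \<le> s"
  shows "yf t - yf s = Lmap C (zf t - zf s) *v \<theta>"
proof -
  have "yf t = x0 + (\<Sum>k\<in>UNIV. (\<theta> $ k) *\<^sub>R C k) *v zf t"
    if "0 \<le> t" for t
    using x_eq[OF that] unfolding yf_def Apar_def
    by (simp add: matrix_vector_mult_add_rdistrib algebra_simps)
  then show ?thesis using assms by (simp add: Lmap_mult matrix_vector_mult_diff_distrib)
qed


lemma zf_cont: "continuous_on {0..b} zf"
proof -
  have "x integrable_on {0..b}"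
    by (rule integrable_continuous_interval, rule continuous_on_subset[OF x_cont]) auto
  then show ?thesis unfolding zf_def[abs_def] by (rule indefinite_integral_continuous_1)
qed

lemma zf_0: "zf 0 = 0" by (simp add: zf_def)

lemma Gm_cont:
  assumes m: "0 \<le> m"
  shows "continuous_on ({m..t} \<times> {m..t}) (\<lambda>(p, q). transpose (Lmap C (zf p - zf q)) ** Lmap C (zf p - zf q))"
proof -
  have c1: "continuous_on ({m..t} \<times> {m..t}) (\<lambda>pq. zf (fst pq))"
    by (rule continuous_on_compose2[OF zf_cont[of t] continuous_on_fst]) (use m in auto)
  have c2: "continuous_on ({m..t} \<times> {m..t}) (\<lambda>pq. zf (snd pq))"
    by (rule continuous_on_compose2[OF zf_cont[of t] continuous_on_snd]) (use m in auto)
  have cd: "continuous_on ({m..t} \<times> {m..t}) (\<lambda>pq. zf (fst pq) - zf (snd pq))"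
    by (rule continuous_on_diff[OF c1 c2])
  have "continuous_on ({m..t} \<times> {m..t})
      (\<lambda>pq. transpose (Lmap C (zf (fst pq) - zf (snd pq))) ** Lmap C (zf (fst pq) - zf (snd pq)))"
    by (rule continuous_on_compose2[OF cont_Phi[of UNIV] cd]) auto
  then show ?thesis by (simp add: case_prod_unfold)
qed

lemma q_eq:
  assumes m: "0 \<le> m"
  shows "qfun C zf yf t m = Qfun C zf t m *v \<theta>"
proof -
  have "qfun C zf yf t m = integral {m..t} (\<lambda>p. integral {m..t} (\<lambda>q.
      (transpose (Lmap C (zf p - zf q)) ** Lmap C (zf p - zf q)) *v \<theta>))"
    unfolding qfun_def
  proof (rule integral_cong, rule integral_cong)
    fix p q assume "p \<in> {m..t}" "q \<in> {m..t}"
    then have "yf p - yf q = Lmap C (zf p - zf q) *v \<theta>" using m by (intro y_diff) auto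
    then show "transpose (Lmap C (zf p - zf q)) *v (yf p - yf q) =
        (transpose (Lmap C (zf p - zf q)) ** Lmap C (zf p - zf q)) *v \<theta>"
      by (simp add: matrix_vector_mul_assoc)
  qed
  also have "\<dots> = Qfun C zf t m *v \<theta>"
    unfolding Qfun_def by (rule dbl_lin[OF bl_mv Gm_cont[OF m]])
  finally show ?thesis .
qed

lemma mu_nonneg: "0 \<le> mu i"
proof -
  define J where "J = {j. j \<le> i \<and> \<tau> j \<ge> \<tau> (Suc i) - real N * T}"
  have "finite J" unfolding J_def by auto
  moreover have "i \<in> J"
  proof -
    have "T \<le> real N * T" using N_gt1 T_pos by simp
    then show ?thesis using tau_leT[of i] unfolding J_def by simp
  qed
  ultimately have "Min (\<tau> ` J) \<in> \<tau> ` J" by (intro Min_in) auto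
  then show ?thesis using tau_nonneg unfolding mu_def J_def[symmetric] by auto
qed

lemma mu0: "mu 0 = 0"
proof -
  have "T \<le> real N * T" using N_gt1 T_pos by simp
  then have "{j. j \<le> 0 \<and> \<tau> j \<ge> \<tau> (Suc 0) - real N * T} = {0}"
    using tau1_le tau0 by auto
  then show ?thesis unfolding mu_def using tau0 by simp
qed

lemma th_step: assumes "th (\<tau> i) = \<theta>" shows "th (\<tau> (Suc i)) = \<theta>"
proof -
  have "(norm (th (\<tau> (Suc i)) - th (\<tau> i)))\<^sup>2 \<le> (norm (\<theta> - th (\<tau> i)))\<^sup>2"
    by (rule update(2)) (rule q_eq[OF mu_nonneg])
  then show ?thesis using assms by simp
qed


lemma th1:
  assumes x0nz: "x0 \<noteq> 0"
    and obs: "\<forall>\<theta> \<theta>h v. \<theta>h \<noteq> \<theta> \<and> v \<noteq> 0 \<longrightarrow>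
                 observable (Apar A C \<theta> + B ** K \<theta>h) (\<Sum>k\<in>UNIV. (v $ k) *\<^sub>R C k)"
  shows "th (\<tau> 1) = \<theta>"
proof (cases "th0 = \<theta>")
  case True
  then have "th (\<tau> 0) = \<theta>" using tau0 th_0 by simp
  then show ?thesis using th_step[of 0] by simp
next
  case False
  define t1 where "t1 = \<tau> 1"
  have t1: "0 < t1" using tau_less[of 0] tau0 by (simp add: t1_def)
  define Q1 where "Q1 = Qfun C zf t1 0"
  have "Q1 *v th t1 = Q1 *v \<theta>"
    using update(1)[of 0] q_eq[of 0 t1] mu0 by (simp add: Q1_def t1_def)
  then have Qv: "Q1 *v (th t1 - \<theta>) = 0" by (simp add: matrix_vector_mult_diff_distrib)
  define v where "v = th t1 - \<theta>"
  show ?thesis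
  proof (rule ccontr)
    assume "th (\<tau> 1) \<noteq> \<theta>"
    then have vnz: "v \<noteq> 0" by (simp add: v_def t1_def)
    define h2 where "h2 M = inner v (M *v v)" for M :: "real^'l^'l"
    have bh2: "bounded_linear h2"
      unfolding linear_conv_bounded_linear[symmetric] h2_def
      by (simp add: linear_iff matrix_vector_mult_add_rdistrib scaleR_matrix_vector_assoc[symmetric]
          inner_add_right)
    define gg where "gg p q = inner (Lmap C (zf p - zf q) *v v) (Lmap C (zf p - zf q) *v v)" for p q
    have hg: "h2 (transpose (Lmap C (zf p - zf q)) ** Lmap C (zf p - zf q)) = gg p q" for p q
      unfolding h2_def gg_def
      by (simp add: matrix_vector_mul_assoc[symmetric] inner_commute[of v] dot_lmul_matrix)
    have gg_nn: "0 \<le> gg p q" for p q by (simp add: gg_def)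
    have cgg: "continuous_on ({0..t1} \<times> {0..t1}) (\<lambda>(p, q). gg p q)"
    proof -
      have "continuous_on ({0..t1} \<times> {0..t1})
          (\<lambda>pq. h2 ((\<lambda>(p, q). transpose (Lmap C (zf p - zf q)) ** Lmap C (zf p - zf q)) pq))"
        by (rule bounded_linear.continuous_on[OF bh2 Gm_cont]) simp
      then show ?thesis by (simp add: case_prod_unfold hg)
    qed
    have "integral {0..t1} (\<lambda>p. integral {0..t1} (\<lambda>q. gg p q)) = h2 Q1"
      using dbl_lin[OF bh2 Gm_cont[of 0 t1]] by (simp add: hg Q1_def Qfun_def)
    also have "\<dots> = 0" using Qv by (simp add: h2_def v_def)
    finally have I0: "integral {0..t1} (\<lambda>p. integral {0..t1} (\<lambda>q. gg p q)) = 0" .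
    have cG1: "continuous_on {0..t1} (\<lambda>p. integral (cbox 0 t1) (gg p))"
      by (rule integral_continuous_on_param) (use cgg in \<open>simp add: cbox_interval\<close>)
    have cgp: "continuous_on {0..t1} (gg p)" if "p \<in> {0..t1}" for p
    proof -
      have "continuous_on {0..t1} ((\<lambda>(p, q). gg p q) \<circ> (\<lambda>q. (p, q)))"
        by (rule continuous_on_compose[OF _ continuous_on_subset[OF cgg]])
           (use that in \<open>auto intro!: continuous_intros\<close>)
      then show ?thesis by (simp add: o_def)
    qed
    have G1z: "integral {0..t1} (gg p) = 0" if p: "p \<in> {0..t1}" for p
    proof (rule has_integral_0_cbox_imp_0[of 0 t1 "\<lambda>p. integral {0..t1} (gg p)"])
      show "continuous_on (cbox 0 t1) (\<lambda>p. integral {0..t1} (gg p))"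
        using cG1 by (simp add: cbox_interval)
      show "0 \<le> integral {0..t1} (gg p)" if "p \<in> box 0 t1" for p
      proof (rule integral_nonneg)
        show "gg p integrable_on {0..t1}"
          by (rule integrable_continuous_interval[OF cgp]) (use that in \<open>auto simp: box_real\<close>)
      qed (rule gg_nn)
      show "((\<lambda>p. integral {0..t1} (gg p)) has_integral 0) (cbox 0 t1)"
        using I0 integrable_continuous_interval[OF cG1[unfolded cbox_interval]]
        by (simp add: cbox_interval has_integral_integral)
      show "box 0 t1 \<noteq> {}" using t1 by (simp add: box_real)
      show "p \<in> cbox 0 t1" using p by (simp add: cbox_interval)
    qed
    define Hv where "Hv = (\<Sum>k\<in>UNIV. (v $ k) *\<^sub>R C k)"
    have Hz: "Hv *v zf p = 0" if p: "p \<in> {0..t1}" for p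
    proof -
      have "gg p 0 = 0"
      proof (rule has_integral_0_cbox_imp_0[of 0 t1 "gg p"])
        show "continuous_on (cbox 0 t1) (gg p)" using cgp[OF p] by (simp add: cbox_interval)
        show "0 \<le> gg p q" for q by (rule gg_nn)
        show "(gg p has_integral 0) (cbox 0 t1)"
          using G1z[OF p] integrable_continuous_interval[OF cgp[OF p]]
          by (simp add: cbox_interval has_integral_integral)
        show "box 0 t1 \<noteq> {}" using t1 by (simp add: box_real)
        show "0 \<in> cbox 0 t1" using t1 by (simp add: cbox_interval)
      qed
      then show ?thesis by (simp add: gg_def zf_0 Lmap_mult Hv_def)
    qed
    have xint: "continuous_on {0..t1} x" by (rule continuous_on_subset[OF x_cont]) auto
    have Hx: "Hv *v x p = 0" if p: "p \<in> {0<..<t1}" for p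
    proof -
      have "((\<lambda>s. Hv *v zf s) has_vector_derivative Hv *v x p) (at p within {0..t1})"
        unfolding zf_def
        by (rule bounded_linear.has_vector_derivative[OF matrix_vector_mul_bounded_linear
              integral_has_vector_derivative[OF xint]]) (use p in auto)
      moreover have "at p within {0..t1} = at p" by (rule at_within_interior) (use p in auto)
      ultimately have d1: "((\<lambda>s. Hv *v zf s) has_vector_derivative Hv *v x p) (at p)" by simp
      have d2: "((\<lambda>s. 0) has_vector_derivative Hv *v x p) (at p)"
        by (rule has_vector_derivative_transform_within_open[OF d1 _ p]) (auto intro: Hz)
      show ?thesis using vector_derivative_unique_at[OF d2 has_vector_derivative_const] .
    qed
    have Hx': "Hv *v x p = 0" if p: "p \<in> {0..t1}" for p
    proof (rule continuous_constant_on_closure[of "{0<..<t1}"])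
      show "continuous_on (closure {0<..<t1}) (\<lambda>p. Hv *v x p)"
        using t1 by (simp add: bounded_linear.continuous_on[OF matrix_vector_mul_bounded_linear xint])
      show "p \<in> closure {0<..<t1}" using t1 p by simp
    qed (rule Hx)
    have "\<forall>p\<in>{0..t1}. Hv *v (mat_exp (p *\<^sub>R (Apar A C \<theta> + B ** K th0)) *v x0) = 0"
    proof
      fix p assume p: "p \<in> {0..t1}"
      have "x p = mat_exp ((p - \<tau> 0) *\<^sub>R Fm 0) *v x (\<tau> 0)"
        by (rule ode_interval) (use p in \<open>simp add: t1_def tau0\<close>)
      then have "x p = mat_exp (p *\<^sub>R (Apar A C \<theta> + B ** K th0)) *v x0"
        by (simp add: tau0 Fm_def th_0 x_0)
      then show "Hv *v (mat_exp (p *\<^sub>R (Apar A C \<theta> + B ** K th0)) *v x0) = 0"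
        using Hx'[OF p] by simp
    qed
    moreover have "observable (Apar A C \<theta> + B ** K th0) Hv"
      using obs False vnz unfolding Hv_def by blast
    ultimately have "x0 = 0" using t1 unfolding observable_def by blast
    then show False using x0nz by simp
  qed
qed


definition Fth :: "real^'n^'n" where "Fth = Apar A C \<theta> + B ** K \<theta>"

context
  assumes x0nz: "x0 \<noteq> 0"
    and obs: "\<forall>\<theta> \<theta>h v. \<theta>h \<noteq> \<theta> \<and> v \<noteq> 0 \<longrightarrow>
                 observable (Apar A C \<theta> + B ** K \<theta>h) (\<Sum>k\<in>UNIV. (v $ k) *\<^sub>R C k)"
begin

lemma th_all: "1 \<le> i \<Longrightarrow> th (\<tau> i) = \<theta>"
proof (induct i)
  case 0 then show ?case by simp
next
  case (Suc i)
  show ?case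
  proof (cases "i = 0")
    case True then show ?thesis using th1[OF x0nz obs] by simp
  next
    case False then show ?thesis using Suc th_step by simp
  qed
qed

lemma x_after_aux: "\<forall>t\<in>{\<tau> 1..\<tau> (Suc i)}. x t = mat_exp ((t - \<tau> 1) *\<^sub>R Fth) *v x (\<tau> 1)"
proof (induct i)
  case 0
  show ?case
  proof
    fix t assume "t \<in> {\<tau> 1..\<tau> (Suc 0)}"
    then have "t = \<tau> 1" by simp
    then show "x t = mat_exp ((t - \<tau> 1) *\<^sub>R Fth) *v x (\<tau> 1)"
      using mat_exp_zero[of Fth] by simp
  qed
next
  case (Suc i)
  show ?case
  proof
    fix t assume t: "t \<in> {\<tau> 1..\<tau> (Suc (Suc i))}"
    show "x t = mat_exp ((t - \<tau> 1) *\<^sub>R Fth) *v x (\<tau> 1)"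
    proof (cases "t \<le> \<tau> (Suc i)")
      case True
      then have "t \<in> {\<tau> 1..\<tau> (Suc i)}" using t by simp
      then show ?thesis using Suc by blast
    next
      case tl: False
      have Fi: "Fm (Suc i) = Fth" using th_all[of "Suc i"] by (simp add: Fm_def Fth_def)
      have "t \<in> {\<tau> (Suc i)..\<tau> (Suc (Suc i))}" using tl t by simp
      then have e1: "x t = mat_exp ((t - \<tau> (Suc i)) *\<^sub>R Fm (Suc i)) *v x (\<tau> (Suc i))"
        by (rule ode_interval)
      have "\<tau> (Suc i) \<in> {\<tau> 1..\<tau> (Suc i)}" using tau_mono[of 1 "Suc i"] by simp
      then have e2: "x (\<tau> (Suc i)) = mat_exp ((\<tau> (Suc i) - \<tau> 1) *\<^sub>R Fth) *v x (\<tau> 1)"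
        using Suc by blast
      have "x t = (mat_exp ((t - \<tau> (Suc i)) *\<^sub>R Fth) ** mat_exp ((\<tau> (Suc i) - \<tau> 1) *\<^sub>R Fth)) *v x (\<tau> 1)"
        unfolding e1 e2 Fi by (simp only: matrix_vector_mul_assoc)
      also have "\<dots> = mat_exp ((t - \<tau> 1) *\<^sub>R Fth) *v x (\<tau> 1)"
        by (simp only: mat_exp_add) simp
      finally show ?thesis .
    qed
  qed
qed

lemma x_after: "1 \<le> i \<Longrightarrow> t \<in> {\<tau> 1..\<tau> i} \<Longrightarrow> x t = mat_exp ((t - \<tau> 1) *\<^sub>R Fth) *v x (\<tau> 1)"
proof -
  assume "1 \<le> i" "t \<in> {\<tau> 1..\<tau> i}"
  moreover from \<open>1 \<le> i\<close> obtain j where "i = Suc j" by (cases i) auto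
  ultimately show ?thesis using x_after_aux[of j] by blast
qed

lemma th_late: "T \<le> t \<Longrightarrow> th t = \<theta>"
proof -
  assume tT: "T \<le> t"
  then obtain i where i: "\<tau> i \<le> t" "t < \<tau> (Suc i)" using exists_interval[of t] T_pos by auto
  have "i \<noteq> 0" using i tT tau1_le by (cases i) auto
  then have "th (\<tau> i) = \<theta>" using th_all by simp
  then show ?thesis using interval_facts(2)[of t i] i by simp
qed

end

lemma bound:
  fixes \<omega> :: "real^'l \<Rightarrow> real"
  assumes obs: "\<forall>\<theta> \<theta>h v. \<theta>h \<noteq> \<theta> \<and> v \<noteq> 0 \<longrightarrow>
                 observable (Apar A C \<theta> + B ** K \<theta>h) (\<Sum>k\<in>UNIV. (v $ k) *\<^sub>R C k)"
    and stab: "\<forall>v. \<forall>t\<ge>0. mat_norm (mat_exp (t *\<^sub>R (Apar A C v + B ** K v)))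
                          \<le> exp (- \<omega> v * t) * M v"
    and wp: "\<omega> \<theta> > 0"
    and t: "0 \<le> t"
  shows "norm (x t) \<le> exp (\<omega> \<theta> * T) * M \<theta> * sqrt (a + (M th0)\<^sup>2) * exp (- \<omega> \<theta> * t) * norm x0"
proof (cases "x0 = 0")
  case True then show ?thesis using x0_zero[OF True t] by simp
next
  case x0nz: False
  define c0 where "c0 = sqrt (a + (M th0)\<^sup>2)"
  have c0: "cc 0 = c0" by (simp add: cc_def c0_def tau0 th_0)
  have c0pos: "0 \<le> c0" using a_pos by (simp add: c0_def)
  have Mth: "1 \<le> M \<theta>" by (rule M_ge1)
  have b1: "norm (x s) \<le> norm x0 * c0" if "s \<in> {0..\<tau> 1}" for s
    using trigger_bound[of 0 s] that x0nz by (simp add: tau0 x_0 c0)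
  have eT: "exp (- \<omega> \<theta> * (t - \<tau> 1)) \<le> exp (\<omega> \<theta> * T) * exp (- \<omega> \<theta> * t)"
  proof -
    have "- \<omega> \<theta> * (t - \<tau> 1) \<le> \<omega> \<theta> * T + - \<omega> \<theta> * t"
      using tau1_le wp by (simp add: algebra_simps)
    then show ?thesis by (simp add: exp_add[symmetric])
  qed
  show ?thesis
  proof (cases "t \<le> \<tau> 1")
    case True
    have R: "1 \<le> exp (\<omega> \<theta> * T) * exp (- \<omega> \<theta> * t) * M \<theta>"
    proof -
      have "0 \<le> \<omega> \<theta> * T + - \<omega> \<theta> * t" using True tau1_le wp
        by (simp add: algebra_simps)
      then have "1 \<le> exp (\<omega> \<theta> * T) * exp (- \<omega> \<theta> * t)" by (simp add: exp_add[symmetric])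
      then have "1 * 1 \<le> (exp (\<omega> \<theta> * T) * exp (- \<omega> \<theta> * t)) * M \<theta>"
        using Mth by (intro mult_mono) auto
      then show ?thesis by simp
    qed
    have "norm (x t) \<le> norm x0 * c0" using b1 True t by simp
    also have "\<dots> = 1 * (norm x0 * c0)" by simp
    also have "\<dots> \<le> (exp (\<omega> \<theta> * T) * exp (- \<omega> \<theta> * t) * M \<theta>) * (norm x0 * c0)"
      by (rule mult_right_mono[OF R]) (use c0pos in simp)
    finally show ?thesis by (simp add: c0_def mult_ac)
  next
    case False
    obtain i where i: "\<tau> i \<le> t" "t < \<tau> (Suc i)" using exists_interval[OF t] by blast
    have "x t = mat_exp ((t - \<tau> 1) *\<^sub>R Fth) *v x (\<tau> 1)"
      by (rule x_after[OF x0nz obs, of "Suc i"]) (use False i in auto)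
    then have "norm (x t) \<le> mat_norm (mat_exp ((t - \<tau> 1) *\<^sub>R Fth)) * norm (x (\<tau> 1))"
      by (simp add: mat_norm_def onorm[OF matrix_vector_mul_bounded_linear])
    also have "\<dots> \<le> (exp (- \<omega> \<theta> * (t - \<tau> 1)) * M \<theta>) * (norm x0 * c0)"
    proof (rule mult_mono)
      show "mat_norm (mat_exp ((t - \<tau> 1) *\<^sub>R Fth)) \<le> exp (- \<omega> \<theta> * (t - \<tau> 1)) * M \<theta>"
        using stab False unfolding Fth_def by simp
      show "norm (x (\<tau> 1)) \<le> norm x0 * c0" using b1 tau_nonneg[of 1] by simp
      show "0 \<le> exp (- \<omega> \<theta> * (t - \<tau> 1)) * M \<theta>" using Mth by simp
    qed simp
    also have "\<dots> \<le> (exp (\<omega> \<theta> * T) * exp (- \<omega> \<theta> * t) * M \<theta>) * (norm x0 * c0)"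
      by (intro mult_right_mono eT) (use Mth c0pos in auto)
    finally show ?thesis by (simp add: c0_def mult_ac)
  qed
qed

end

theorem corollary3p4:
  fixes A :: "real^'n^'n" and B :: "real^'m^'n" and C :: "'l::finite \<Rightarrow> real^'n^'n"
    and K :: "real^'l \<Rightarrow> real^'n^'m" and \<omega> :: "real^'l \<Rightarrow> real" and M :: "real^'l \<Rightarrow> real"
    and a T :: real and N :: nat
  assumes \<omega>_pos: "\<forall>v. \<omega> v > 0"
    and M_cont: "continuous_on UNIV M"
    and M_ge1: "\<forall>v. M v \<ge> 1"
    and stab: "\<forall>v. \<forall>t\<ge>0. mat_norm (mat_exp (t *\<^sub>R (Apar A C v + B ** K v)))
                          \<le> exp (- \<omega> v * t) * M v"
    and obs: "\<forall>\<theta> \<theta>h v. \<theta>h \<noteq> \<theta> \<and> v \<noteq> 0 \<longrightarrow>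
                 observable (Apar A C \<theta> + B ** K \<theta>h) (\<Sum>k\<in>UNIV. (v $ k) *\<^sub>R C k)"
    and a_pos: "a > 0" and T_pos: "T > 0" and N_gt1: "N > 1"
  shows "\<exists>Mt :: real^'l \<Rightarrow> real^'l \<Rightarrow> real.
           (\<forall>\<theta> \<theta>h. Mt \<theta> \<theta>h > 0)
         \<and> (\<forall>\<theta> th0 x0 \<tau> x u th.
              hybrid_solution A B C K M a T N \<theta> x0 th0 \<tau> x u th \<longrightarrow>
                (\<forall>t\<ge>0. norm (x t) \<le> Mt \<theta> th0 * exp (- \<omega> \<theta> * t) * norm x0)
              \<and> (x0 \<noteq> 0 \<longrightarrow> (\<forall>t\<ge>T. th t = \<theta>)))"
proof -
  define Mt where "Mt = (\<lambda>(\<theta>::real^'l) (th0::real^'l). exp (\<omega> \<theta> * T) * M \<theta> * sqrt (a + (M th0)\<^sup>2))"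
  have pos: "\<forall>\<theta> \<theta>h. Mt \<theta> \<theta>h > 0"
  proof (intro allI)
    fix \<theta> \<theta>h
    have "M \<theta> > 0" using M_ge1 by (meson less_le_trans zero_less_one)
    moreover have "sqrt (a + (M \<theta>h)\<^sup>2) > 0" using a_pos by (simp add: add_pos_nonneg)
    ultimately show "Mt \<theta> \<theta>h > 0" by (simp add: Mt_def)
  qed
  have main: "\<forall>\<theta> th0 x0 \<tau> x u th.
              hybrid_solution A B C K M a T N \<theta> x0 th0 \<tau> x u th \<longrightarrow>
                (\<forall>t\<ge>0. norm (x t) \<le> Mt \<theta> th0 * exp (- \<omega> \<theta> * t) * norm x0)
              \<and> (x0 \<noteq> 0 \<longrightarrow> (\<forall>t\<ge>T. th t = \<theta>))"
  proof (intro allI impI)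
    fix \<theta> th0 x0 \<tau> x u th
    assume hyb: "hybrid_solution A B C K M a T N \<theta> x0 th0 \<tau> x u th"
    interpret hs A B C K M a T N \<theta> x0 th0 \<tau> x u th
      using hyb a_pos T_pos N_gt1 M_ge1 by unfold_locales auto
    show "(\<forall>t\<ge>0. norm (x t) \<le> Mt \<theta> th0 * exp (- \<omega> \<theta> * t) * norm x0)
              \<and> (x0 \<noteq> 0 \<longrightarrow> (\<forall>t\<ge>T. th t = \<theta>))"
    proof (intro conjI allI impI)
      fix t :: real assume "0 \<le> t"
      then show "norm (x t) \<le> Mt \<theta> th0 * exp (- \<omega> \<theta> * t) * norm x0"
        using bound[OF obs stab] \<omega>_pos unfolding Mt_def by simp
    next
      fix t :: real assume "x0 \<noteq> 0" "T \<le> t"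
      then show "th t = \<theta>" using th_late obs by blast
    qed
  qed
  show ?thesis using pos main by blast
qed

end
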